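(* Let $\mathfrak{G}$ be the CFSTR on species $A,B,C,D,E,F$ whose non-flow reactions are $D\rightleftarrows A+B+C$, $E\rightleftarrows A+B+C$, $F\rightleftarrows A+B$, together with the outflow reaction $X\to0$ for each of the six species (and possibly any inflow reactions). Then $\mathfrak{G}$ passes the Jacobian Criterion.
   Context: A reaction $y\to y'$ has complexes $y,y'\in\mathbb{Z}^s_{\ge0}$, $y\neq y'$; $u\rightleftarrows v$ denotes the two reactions $u\to v$ and $v\to u$; inflows $0\to X$ and outflows $X\to0$ are flow reactions. For a list of $s$ reactions $y_k\to y_k'$ on $s$ species: reactant matrix $M$ (row $k$ is $y_k$), reaction matrix $R$ (row $k$ is $y_k-y'_k$), orientation $\operatorname{sign}(\det M\det R)$. A CFSTR with $s$ species passes the Jacobian Criterion if every choice of $s$ distinct reactions containing no inflow reaction yields $s\times s$ reactant and reaction matrices (columns indexed by all species) with nonnegative orientation. *)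

theory Defs
  imports "HOL-Analysis.Analysis"
begin

type_synonym 's complex = "'s \<Rightarrow> nat"
type_synonym 's reaction = "'s complex \<times> 's complex"

definition unit_cplx :: "'s \<Rightarrow> 's complex" where
  "unit_cplx X = (\<lambda>Y. if Y = X then 1 else 0)"

definition inflow :: "'s \<Rightarrow> 's reaction" where
  "inflow X = (\<lambda>_. 0, unit_cplx X)"

definition outflow :: "'s \<Rightarrow> 's reaction" where
  "outflow X = (unit_cplx X, \<lambda>_. 0)"

definition is_inflow :: "'s reaction \<Rightarrow> bool" where
  "is_inflow r \<longleftrightarrow> (\<exists>X. r = inflow X)"

definition reactant_matrix :: "('k \<Rightarrow> 's reaction) \<Rightarrow> real ^ 's ^ 'k" where
  "reactant_matrix f = (\<chi> k j. real (fst (f k) j))"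

definition reaction_matrix :: "('k \<Rightarrow> 's reaction) \<Rightarrow> real ^ 's ^ 'k" where
  "reaction_matrix f = (\<chi> k j. real (fst (f k) j) - real (snd (f k) j))"

definition orientation :: "('s::finite \<Rightarrow> 's reaction) \<Rightarrow> real" where
  "orientation f = sgn (det (reactant_matrix f) * det (reaction_matrix f))"

text \<open>A choice of s distinct reactions is an injective map from an s-element row index set
(here 's itself) into N.\<close>

definition passes_jacobian_criterion :: "('s::finite) reaction set \<Rightarrow> bool" where
  "passes_jacobian_criterion N \<longleftrightarrow>
     (\<forall>f :: 's \<Rightarrow> 's reaction. inj f \<longrightarrow> (\<forall>k. f k \<in> N \<and> \<not> is_inflow (f k))
        \<longrightarrow> orientation f \<ge> 0)"

datatype species = A | B | C | D | E | F

lemma UNIV_species: "(UNIV :: species set) = {A, B, C, D, E, F}"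
  using species.exhaust by auto

instance species :: finite
  by standard (simp add: UNIV_species)

definition ABC :: "species complex" where
  "ABC = (\<lambda>X. unit_cplx A X + unit_cplx B X + unit_cplx C X)"

definition AB :: "species complex" where
  "AB = (\<lambda>X. unit_cplx A X + unit_cplx B X)"

definition nonflow_reactions :: "species reaction set" where
  "nonflow_reactions =
     {(unit_cplx D, ABC), (ABC, unit_cplx D),
      (unit_cplx E, ABC), (ABC, unit_cplx E),
      (unit_cplx F, AB), (AB, unit_cplx F)}"

definition network :: "species reaction set \<Rightarrow> species reaction set" where
  "network I = nonflow_reactions \<union> range outflow \<union> I"

end

theory Submission
  imports Defs
begin
lemma row_lambda: "row i (vec_lambda f) = f i"
  by (simp add: row_def vec_eq_iff)
lemma det_add_rows:
  fixes A :: "real^'n^'n" and K :: "'n set"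
  assumes "\<forall>i\<in>K. g i \<notin> K"
  shows "det (\<chi> i. if i \<in> K then row i A + row (g i) A else row i A) = det A"
proof -
  have "finite K" by simp
  then show ?thesis using assms
  proof (induction K rule: finite_induct)
    case empty
    then show ?case by (simp add: row_def vec_eq_iff)
  next
    case (insert k K)
    define B where "B = ((\<chi> i. if i \<in> K then row i A + row (g i) A else row i A) :: real^'n^'n)"
    have gk: "g k \<notin> insert k K" using insert by auto
    have IH: "det B = det A" using insert unfolding B_def by auto
    have rB: "row i B = (if i \<in> K then row i A + row (g i) A else row i A)" for i
      unfolding B_def by (rule row_lambda)
    have "(\<chi> i. if i \<in> insert k K then row i A + row (g i) A else row i A)
       = (\<chi> i. if i = k then row k B + 1 *s row (g k) B else row i B)"
      unfolding rB using gk insert(2) by (intro arg_cong[where f=vec_lambda] ext) auto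
    also have "det \<dots> = det B"
    proof -
      have "k \<noteq> g k" using gk by auto
      then show ?thesis by (rule det_row_operation)
    qed
    finally show ?case using IH by simp
  qed
qed
lemma det_neg_rows:
  fixes A :: "real^'n^'n"
  assumes "i \<noteq> j" "row i A = - row j A"
  shows "det A = 0"
proof -
  have "det A = det (\<chi> k. if k = i then row i A + 1 *s row j A else row k A)"
    using det_row_operation[OF assms(1), of A 1] by (simp only: scalar_mult_eq_scaleR scaleR_one)
  also have "\<dots> = 0"
    by (rule det_zero_row(1)[of i]) (use assms in \<open>simp add: row_lambda\<close>)
  finally show ?thesis .
qed

fun rk :: "species \<Rightarrow> nat" where
  "rk A = 0" | "rk B = 1" | "rk C = 2" | "rk D = 3" | "rk E = 4" | "rk F = 5"

instantiation species :: linorder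
begin
definition less_eq_species :: "species \<Rightarrow> species \<Rightarrow> bool" where
  "x \<le> y \<longleftrightarrow> rk x \<le> rk y"
definition less_species :: "species \<Rightarrow> species \<Rightarrow> bool" where
  "x < y \<longleftrightarrow> rk x < rk y"
instance proof
  fix x y :: species
  show "x \<le> y \<Longrightarrow> y \<le> x \<Longrightarrow> x = y"
    by (cases x; cases y; simp add: less_eq_species_def)
qed (auto simp: less_eq_species_def less_species_def)
end

instance species :: wellorder
proof (rule wf_wellorderI)
  have "inv_image less_than rk = {(x, y). x < y}"
    by (auto simp add: less_species_def)
  from this[symmetric] show "wf {(x, y::species). x < y}" by simp
qed intro_classes

abbreviation "rr1 \<equiv> (unit_cplx D, ABC)"
abbreviation "rr2 \<equiv> (ABC, unit_cplx D)"
abbreviation "rr3 \<equiv> (unit_cplx E, ABC)"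
abbreviation "rr4 \<equiv> (ABC, unit_cplx E)"
abbreviation "rr5 \<equiv> (unit_cplx F, AB)"
abbreviation "rr6 \<equiv> (AB, unit_cplx F)"

definition vl :: "species reaction \<Rightarrow> nat list \<times> nat list" where
  "vl r = (map (fst r) [A,B,C,D,E,F], map (snd r) [A,B,C,D,E,F])"

lemma vl_neq: "vl r \<noteq> vl s \<Longrightarrow> r \<noteq> s" by auto

lemmas cpl = unit_cplx_def ABC_def AB_def outflow_def inflow_def

lemma N0_cases:
  assumes "r \<in> nonflow_reactions \<union> range outflow"
  obtains "r = rr1" | "r = rr2" | "r = rr3" | "r = rr4" | "r = rr5" | "r = rr6"
   | "r = outflow A" | "r = outflow B" | "r = outflow C" | "r = outflow D" | "r = outflow E" | "r = outflow F"
proof -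
  from assms consider "r \<in> nonflow_reactions" | X where "r = outflow X" by blast
  then show ?thesis
  proof cases
    case 1 then show ?thesis unfolding nonflow_reactions_def using that by blast
  next
    case (2 X) then show ?thesis using that by (cases X) auto
  qed
qed

lemma sum_species: "sum g (UNIV::species set) = g A + g B + g C + g D + g E + g F"
  by (simp add: UNIV_species add.assoc)

lemma rneq1[simp]: "rr1 \<noteq> rr2" by (rule vl_neq) (simp add: vl_def cpl)
lemma rneq2[simp]: "rr1 \<noteq> rr3" by (rule vl_neq) (simp add: vl_def cpl)
lemma rneq3[simp]: "rr1 \<noteq> rr4" by (rule vl_neq) (simp add: vl_def cpl)
lemma rneq4[simp]: "rr1 \<noteq> rr5" by (rule vl_neq) (simp add: vl_def cpl)
lemma rneq5[simp]: "rr1 \<noteq> rr6" by (rule vl_neq) (simp add: vl_def cpl)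
lemma rneq6[simp]: "rr1 \<noteq> outflow A" by (rule vl_neq) (simp add: vl_def cpl)
lemma rneq7[simp]: "rr1 \<noteq> outflow B" by (rule vl_neq) (simp add: vl_def cpl)
lemma rneq8[simp]: "rr1 \<noteq> outflow C" by (rule vl_neq) (simp add: vl_def cpl)
lemma rneq9[simp]: "rr1 \<noteq> outflow D" by (rule vl_neq) (simp add: vl_def cpl)
lemma rneq10[simp]: "rr1 \<noteq> outflow E" by (rule vl_neq) (simp add: vl_def cpl)
lemma rneq11[simp]: "rr1 \<noteq> outflow F" by (rule vl_neq) (simp add: vl_def cpl)
lemma rneq12[simp]: "rr2 \<noteq> rr1" by (rule vl_neq) (simp add: vl_def cpl)
lemma rneq13[simp]: "rr2 \<noteq> rr3" by (rule vl_neq) (simp add: vl_def cpl)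
lemma rneq14[simp]: "rr2 \<noteq> rr4" by (rule vl_neq) (simp add: vl_def cpl)
lemma rneq15[simp]: "rr2 \<noteq> rr5" by (rule vl_neq) (simp add: vl_def cpl)
lemma rneq16[simp]: "rr2 \<noteq> rr6" by (rule vl_neq) (simp add: vl_def cpl)
lemma rneq17[simp]: "rr2 \<noteq> outflow A" by (rule vl_neq) (simp add: vl_def cpl)
lemma rneq18[simp]: "rr2 \<noteq> outflow B" by (rule vl_neq) (simp add: vl_def cpl)
lemma rneq19[simp]: "rr2 \<noteq> outflow C" by (rule vl_neq) (simp add: vl_def cpl)
lemma rneq20[simp]: "rr2 \<noteq> outflow D" by (rule vl_neq) (simp add: vl_def cpl)
lemma rneq21[simp]: "rr2 \<noteq> outflow E" by (rule vl_neq) (simp add: vl_def cpl)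
lemma rneq22[simp]: "rr2 \<noteq> outflow F" by (rule vl_neq) (simp add: vl_def cpl)
lemma rneq23[simp]: "rr3 \<noteq> rr1" by (rule vl_neq) (simp add: vl_def cpl)
lemma rneq24[simp]: "rr3 \<noteq> rr2" by (rule vl_neq) (simp add: vl_def cpl)
lemma rneq25[simp]: "rr3 \<noteq> rr4" by (rule vl_neq) (simp add: vl_def cpl)
lemma rneq26[simp]: "rr3 \<noteq> rr5" by (rule vl_neq) (simp add: vl_def cpl)
lemma rneq27[simp]: "rr3 \<noteq> rr6" by (rule vl_neq) (simp add: vl_def cpl)
lemma rneq28[simp]: "rr3 \<noteq> outflow A" by (rule vl_neq) (simp add: vl_def cpl)
lemma rneq29[simp]: "rr3 \<noteq> outflow B" by (rule vl_neq) (simp add: vl_def cpl)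
lemma rneq30[simp]: "rr3 \<noteq> outflow C" by (rule vl_neq) (simp add: vl_def cpl)
lemma rneq31[simp]: "rr3 \<noteq> outflow D" by (rule vl_neq) (simp add: vl_def cpl)
lemma rneq32[simp]: "rr3 \<noteq> outflow E" by (rule vl_neq) (simp add: vl_def cpl)
lemma rneq33[simp]: "rr3 \<noteq> outflow F" by (rule vl_neq) (simp add: vl_def cpl)
lemma rneq34[simp]: "rr4 \<noteq> rr1" by (rule vl_neq) (simp add: vl_def cpl)
lemma rneq35[simp]: "rr4 \<noteq> rr2" by (rule vl_neq) (simp add: vl_def cpl)
lemma rneq36[simp]: "rr4 \<noteq> rr3" by (rule vl_neq) (simp add: vl_def cpl)
lemma rneq37[simp]: "rr4 \<noteq> rr5" by (rule vl_neq) (simp add: vl_def cpl)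
lemma rneq38[simp]: "rr4 \<noteq> rr6" by (rule vl_neq) (simp add: vl_def cpl)
lemma rneq39[simp]: "rr4 \<noteq> outflow A" by (rule vl_neq) (simp add: vl_def cpl)
lemma rneq40[simp]: "rr4 \<noteq> outflow B" by (rule vl_neq) (simp add: vl_def cpl)
lemma rneq41[simp]: "rr4 \<noteq> outflow C" by (rule vl_neq) (simp add: vl_def cpl)
lemma rneq42[simp]: "rr4 \<noteq> outflow D" by (rule vl_neq) (simp add: vl_def cpl)
lemma rneq43[simp]: "rr4 \<noteq> outflow E" by (rule vl_neq) (simp add: vl_def cpl)
lemma rneq44[simp]: "rr4 \<noteq> outflow F" by (rule vl_neq) (simp add: vl_def cpl)
lemma rneq45[simp]: "rr5 \<noteq> rr1" by (rule vl_neq) (simp add: vl_def cpl)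
lemma rneq46[simp]: "rr5 \<noteq> rr2" by (rule vl_neq) (simp add: vl_def cpl)
lemma rneq47[simp]: "rr5 \<noteq> rr3" by (rule vl_neq) (simp add: vl_def cpl)
lemma rneq48[simp]: "rr5 \<noteq> rr4" by (rule vl_neq) (simp add: vl_def cpl)
lemma rneq49[simp]: "rr5 \<noteq> rr6" by (rule vl_neq) (simp add: vl_def cpl)
lemma rneq50[simp]: "rr5 \<noteq> outflow A" by (rule vl_neq) (simp add: vl_def cpl)
lemma rneq51[simp]: "rr5 \<noteq> outflow B" by (rule vl_neq) (simp add: vl_def cpl)
lemma rneq52[simp]: "rr5 \<noteq> outflow C" by (rule vl_neq) (simp add: vl_def cpl)
lemma rneq53[simp]: "rr5 \<noteq> outflow D" by (rule vl_neq) (simp add: vl_def cpl)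
lemma rneq54[simp]: "rr5 \<noteq> outflow E" by (rule vl_neq) (simp add: vl_def cpl)
lemma rneq55[simp]: "rr5 \<noteq> outflow F" by (rule vl_neq) (simp add: vl_def cpl)
lemma rneq56[simp]: "rr6 \<noteq> rr1" by (rule vl_neq) (simp add: vl_def cpl)
lemma rneq57[simp]: "rr6 \<noteq> rr2" by (rule vl_neq) (simp add: vl_def cpl)
lemma rneq58[simp]: "rr6 \<noteq> rr3" by (rule vl_neq) (simp add: vl_def cpl)
lemma rneq59[simp]: "rr6 \<noteq> rr4" by (rule vl_neq) (simp add: vl_def cpl)
lemma rneq60[simp]: "rr6 \<noteq> rr5" by (rule vl_neq) (simp add: vl_def cpl)
lemma rneq61[simp]: "rr6 \<noteq> outflow A" by (rule vl_neq) (simp add: vl_def cpl)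
lemma rneq62[simp]: "rr6 \<noteq> outflow B" by (rule vl_neq) (simp add: vl_def cpl)
lemma rneq63[simp]: "rr6 \<noteq> outflow C" by (rule vl_neq) (simp add: vl_def cpl)
lemma rneq64[simp]: "rr6 \<noteq> outflow D" by (rule vl_neq) (simp add: vl_def cpl)
lemma rneq65[simp]: "rr6 \<noteq> outflow E" by (rule vl_neq) (simp add: vl_def cpl)
lemma rneq66[simp]: "rr6 \<noteq> outflow F" by (rule vl_neq) (simp add: vl_def cpl)
lemma rneq67[simp]: "outflow A \<noteq> rr1" by (rule vl_neq) (simp add: vl_def cpl)
lemma rneq68[simp]: "outflow A \<noteq> rr2" by (rule vl_neq) (simp add: vl_def cpl)
lemma rneq69[simp]: "outflow A \<noteq> rr3" by (rule vl_neq) (simp add: vl_def cpl)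
lemma rneq70[simp]: "outflow A \<noteq> rr4" by (rule vl_neq) (simp add: vl_def cpl)
lemma rneq71[simp]: "outflow A \<noteq> rr5" by (rule vl_neq) (simp add: vl_def cpl)
lemma rneq72[simp]: "outflow A \<noteq> rr6" by (rule vl_neq) (simp add: vl_def cpl)
lemma rneq73[simp]: "outflow A \<noteq> outflow B" by (rule vl_neq) (simp add: vl_def cpl)
lemma rneq74[simp]: "outflow A \<noteq> outflow C" by (rule vl_neq) (simp add: vl_def cpl)
lemma rneq75[simp]: "outflow A \<noteq> outflow D" by (rule vl_neq) (simp add: vl_def cpl)
lemma rneq76[simp]: "outflow A \<noteq> outflow E" by (rule vl_neq) (simp add: vl_def cpl)
lemma rneq77[simp]: "outflow A \<noteq> outflow F" by (rule vl_neq) (simp add: vl_def cpl)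
lemma rneq78[simp]: "outflow B \<noteq> rr1" by (rule vl_neq) (simp add: vl_def cpl)
lemma rneq79[simp]: "outflow B \<noteq> rr2" by (rule vl_neq) (simp add: vl_def cpl)
lemma rneq80[simp]: "outflow B \<noteq> rr3" by (rule vl_neq) (simp add: vl_def cpl)
lemma rneq81[simp]: "outflow B \<noteq> rr4" by (rule vl_neq) (simp add: vl_def cpl)
lemma rneq82[simp]: "outflow B \<noteq> rr5" by (rule vl_neq) (simp add: vl_def cpl)
lemma rneq83[simp]: "outflow B \<noteq> rr6" by (rule vl_neq) (simp add: vl_def cpl)
lemma rneq84[simp]: "outflow B \<noteq> outflow A" by (rule vl_neq) (simp add: vl_def cpl)
lemma rneq85[simp]: "outflow B \<noteq> outflow C" by (rule vl_neq) (simp add: vl_def cpl)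
lemma rneq86[simp]: "outflow B \<noteq> outflow D" by (rule vl_neq) (simp add: vl_def cpl)
lemma rneq87[simp]: "outflow B \<noteq> outflow E" by (rule vl_neq) (simp add: vl_def cpl)
lemma rneq88[simp]: "outflow B \<noteq> outflow F" by (rule vl_neq) (simp add: vl_def cpl)
lemma rneq89[simp]: "outflow C \<noteq> rr1" by (rule vl_neq) (simp add: vl_def cpl)
lemma rneq90[simp]: "outflow C \<noteq> rr2" by (rule vl_neq) (simp add: vl_def cpl)
lemma rneq91[simp]: "outflow C \<noteq> rr3" by (rule vl_neq) (simp add: vl_def cpl)
lemma rneq92[simp]: "outflow C \<noteq> rr4" by (rule vl_neq) (simp add: vl_def cpl)
lemma rneq93[simp]: "outflow C \<noteq> rr5" by (rule vl_neq) (simp add: vl_def cpl)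
lemma rneq94[simp]: "outflow C \<noteq> rr6" by (rule vl_neq) (simp add: vl_def cpl)
lemma rneq95[simp]: "outflow C \<noteq> outflow A" by (rule vl_neq) (simp add: vl_def cpl)
lemma rneq96[simp]: "outflow C \<noteq> outflow B" by (rule vl_neq) (simp add: vl_def cpl)
lemma rneq97[simp]: "outflow C \<noteq> outflow D" by (rule vl_neq) (simp add: vl_def cpl)
lemma rneq98[simp]: "outflow C \<noteq> outflow E" by (rule vl_neq) (simp add: vl_def cpl)
lemma rneq99[simp]: "outflow C \<noteq> outflow F" by (rule vl_neq) (simp add: vl_def cpl)
lemma rneq100[simp]: "outflow D \<noteq> rr1" by (rule vl_neq) (simp add: vl_def cpl)
lemma rneq101[simp]: "outflow D \<noteq> rr2" by (rule vl_neq) (simp add: vl_def cpl)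
lemma rneq102[simp]: "outflow D \<noteq> rr3" by (rule vl_neq) (simp add: vl_def cpl)
lemma rneq103[simp]: "outflow D \<noteq> rr4" by (rule vl_neq) (simp add: vl_def cpl)
lemma rneq104[simp]: "outflow D \<noteq> rr5" by (rule vl_neq) (simp add: vl_def cpl)
lemma rneq105[simp]: "outflow D \<noteq> rr6" by (rule vl_neq) (simp add: vl_def cpl)
lemma rneq106[simp]: "outflow D \<noteq> outflow A" by (rule vl_neq) (simp add: vl_def cpl)
lemma rneq107[simp]: "outflow D \<noteq> outflow B" by (rule vl_neq) (simp add: vl_def cpl)
lemma rneq108[simp]: "outflow D \<noteq> outflow C" by (rule vl_neq) (simp add: vl_def cpl)
lemma rneq109[simp]: "outflow D \<noteq> outflow E" by (rule vl_neq) (simp add: vl_def cpl)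
lemma rneq110[simp]: "outflow D \<noteq> outflow F" by (rule vl_neq) (simp add: vl_def cpl)
lemma rneq111[simp]: "outflow E \<noteq> rr1" by (rule vl_neq) (simp add: vl_def cpl)
lemma rneq112[simp]: "outflow E \<noteq> rr2" by (rule vl_neq) (simp add: vl_def cpl)
lemma rneq113[simp]: "outflow E \<noteq> rr3" by (rule vl_neq) (simp add: vl_def cpl)
lemma rneq114[simp]: "outflow E \<noteq> rr4" by (rule vl_neq) (simp add: vl_def cpl)
lemma rneq115[simp]: "outflow E \<noteq> rr5" by (rule vl_neq) (simp add: vl_def cpl)
lemma rneq116[simp]: "outflow E \<noteq> rr6" by (rule vl_neq) (simp add: vl_def cpl)
lemma rneq117[simp]: "outflow E \<noteq> outflow A" by (rule vl_neq) (simp add: vl_def cpl)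
lemma rneq118[simp]: "outflow E \<noteq> outflow B" by (rule vl_neq) (simp add: vl_def cpl)
lemma rneq119[simp]: "outflow E \<noteq> outflow C" by (rule vl_neq) (simp add: vl_def cpl)
lemma rneq120[simp]: "outflow E \<noteq> outflow D" by (rule vl_neq) (simp add: vl_def cpl)
lemma rneq121[simp]: "outflow E \<noteq> outflow F" by (rule vl_neq) (simp add: vl_def cpl)
lemma rneq122[simp]: "outflow F \<noteq> rr1" by (rule vl_neq) (simp add: vl_def cpl)
lemma rneq123[simp]: "outflow F \<noteq> rr2" by (rule vl_neq) (simp add: vl_def cpl)
lemma rneq124[simp]: "outflow F \<noteq> rr3" by (rule vl_neq) (simp add: vl_def cpl)
lemma rneq125[simp]: "outflow F \<noteq> rr4" by (rule vl_neq) (simp add: vl_def cpl)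
lemma rneq126[simp]: "outflow F \<noteq> rr5" by (rule vl_neq) (simp add: vl_def cpl)
lemma rneq127[simp]: "outflow F \<noteq> rr6" by (rule vl_neq) (simp add: vl_def cpl)
lemma rneq128[simp]: "outflow F \<noteq> outflow A" by (rule vl_neq) (simp add: vl_def cpl)
lemma rneq129[simp]: "outflow F \<noteq> outflow B" by (rule vl_neq) (simp add: vl_def cpl)
lemma rneq130[simp]: "outflow F \<noteq> outflow C" by (rule vl_neq) (simp add: vl_def cpl)
lemma rneq131[simp]: "outflow F \<noteq> outflow D" by (rule vl_neq) (simp add: vl_def cpl)
lemma rneq132[simp]: "outflow F \<noteq> outflow E" by (rule vl_neq) (simp add: vl_def cpl)

lemmas rneqs = rneq1 rneq2 rneq3 rneq4 rneq5 rneq6 rneq7 rneq8 rneq9 rneq10 rneq11 rneq12 rneq13 rneq14 rneq15 rneq16 rneq17 rneq18 rneq19 rneq20 rneq21 rneq22 rneq23 rneq24 rneq25 rneq26 rneq27 rneq28 rneq29 rneq30 rneq31 rneq32 rneq33 rneq34 rneq35 rneq36 rneq37 rneq38 rneq39 rneq40 rneq41 rneq42 rneq43 rneq44 rneq45 rneq46 rneq47 rneq48 rneq49 rneq50 rneq51 rneq52 rneq53 rneq54 rneq55 rneq56 rneq57 rneq58 rneq59 rneq60 rneq61 rneq62 rneq63 rneq64 rneq65 rneq66 rneq67 rneq68 rneq69 rneq70 rneq71 rneq72 rneq73 rneq74 rneq75 rneq76 rneq77 rneq78 rneq79 rneq80 rneq81 rneq82 rneq83 rneq84 rneq85 rneq86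 rneq87 rneq88 rneq89 rneq90 rneq91 rneq92 rneq93 rneq94 rneq95 rneq96 rneq97 rneq98 rneq99 rneq100 rneq101 rneq102 rneq103 rneq104 rneq105 rneq106 rneq107 rneq108 rneq109 rneq110 rneq111 rneq112 rneq113 rneq114 rneq115 rneq116 rneq117 rneq118 rneq119 rneq120 rneq121 rneq122 rneq123 rneq124 rneq125 rneq126 rneq127 rneq128 rneq129 rneq130 rneq131 rneq132


lemma main_det:
  fixes f :: "species \<Rightarrow> species reaction"
  assumes inj: "inj f" and N: "\<forall>k. f k \<in> nonflow_reactions \<union> range outflow"
  shows "det (reactant_matrix f) = 0 \<or> det (reaction_matrix f) = 0 \<or>
         det (reaction_matrix f) = det (reactant_matrix f)"
proof -
  define M where "M = reactant_matrix f"
  define R where "R = reaction_matrix f"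
  have Mij: "M$i$j = real (fst (f i) j)" for i j by (simp add: M_def reactant_matrix_def)
  have Rij: "R$i$j = real (fst (f i) j) - real (snd (f i) j)" for i j by (simp add: R_def reaction_matrix_def)
  have neg: "det R = 0" if h: "a \<in> range f" "b \<in> range f"
     "\<forall>Y. real (fst a Y) - real (snd a Y) = -(real (fst b Y) - real (snd b Y))" "a \<noteq> b" for a b
  proof -
    obtain i j where ij: "f i = a" "f j = b" using h(1,2) by blast
    have "i \<noteq> j" using ij h(4) by auto
    moreover have "row i R = - row j R" using ij h(3) by (simp add: vec_eq_iff row_def Rij)
    ultimately show ?thesis by (rule det_neg_rows)
  qed
  have ident: "det M = 0" if h: "a \<in> range f" "b \<in> range f" "fst a = fst b" "a \<noteq> b" for a b
  proof -
    obtain i j where ij: "f i = a" "f j = b" using h(1,2) by blast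
    have "i \<noteq> j" using ij h(4) by auto
    moreover have "row i M = row j M" using ij h(3) by (simp add: vec_eq_iff row_def Mij)
    ultimately show ?thesis by (rule det_identical_rows)
  qed
  have zcol: "det M = 0" if "\<forall>k. fst (f k) X = 0" for X
    by (rule det_zero_column(1)[of X]) (simp add: vec_eq_iff column_def Mij that)
  have Ncase: "f k \<in> nonflow_reactions \<union> range outflow" for k using N by blast
  have "det M = 0 \<or> det R = 0 \<or> det R = det M"
  proof (cases "rr1 \<in> range f \<and> rr2 \<in> range f \<or> rr3 \<in> range f \<and> rr4 \<in> range f \<or> rr5 \<in> range f \<and> rr6 \<in> range f")
    case True
    have "det R = 0"
      using True
    proof (elim disjE conjE)
      assume "rr1 \<in> range f" "rr2 \<in> range f"
      then show ?thesis by (rule neg) (simp add: cpl, simp only: rneqs not_False_eq_True)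
    next
      assume "rr3 \<in> range f" "rr4 \<in> range f"
      then show ?thesis by (rule neg) (simp add: cpl, simp only: rneqs not_False_eq_True)
    next
      assume "rr5 \<in> range f" "rr6 \<in> range f"
      then show ?thesis by (rule neg) (simp add: cpl, simp only: rneqs not_False_eq_True)
    qed
    then show ?thesis by simp
  next
    case nopair: False
    show ?thesis
    proof (cases "outflow D \<in> range f \<and> rr1 \<in> range f \<or> outflow E \<in> range f \<and> rr3 \<in> range f
       \<or> outflow F \<in> range f \<and> rr5 \<in> range f \<or> rr2 \<in> range f \<and> rr4 \<in> range f")
      case True
      have "det M = 0"
        using True
      proof (elim disjE conjE)
        assume "outflow D \<in> range f" "rr1 \<in> range f"
        then show ?thesis by (rule ident) (simp add: cpl, simp only: rneqs not_False_eq_True)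
      next
        assume "outflow E \<in> range f" "rr3 \<in> range f"
        then show ?thesis by (rule ident) (simp add: cpl, simp only: rneqs not_False_eq_True)
      next
        assume "outflow F \<in> range f" "rr5 \<in> range f"
        then show ?thesis by (rule ident) (simp add: cpl, simp only: rneqs not_False_eq_True)
      next
        assume "rr2 \<in> range f" "rr4 \<in> range f"
        then show ?thesis by (rule ident) (simp add: cpl, simp only: rneqs not_False_eq_True)
      qed
      then show ?thesis by simp
    next
      case noid: False
      show ?thesis
      proof (cases "rr2 \<in> range f \<and> outflow D \<notin> range f \<or> rr4 \<in> range f \<and> outflow E \<notin> range f
          \<or> rr6 \<in> range f \<and> outflow F \<notin> range f")
        case True
        have "det M = 0"
          using True
        proof (elim disjE conjE)
          assume h: "rr2 \<in> range f" "outflow D \<notin> range f"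
          have "rr1 \<notin> range f" using h nopair by blast
          have "\<forall>k. fst (f k) D = 0"
          proof
            fix k
            have "f k \<noteq> outflow D" "f k \<noteq> rr1" using h(2) \<open>rr1 \<notin> range f\<close> by (metis rangeI)+
            with Ncase[of k] show "fst (f k) D = 0"
              by (cases rule: N0_cases) (auto simp: cpl)
          qed
          then show ?thesis by (rule zcol)
        next
          assume h: "rr4 \<in> range f" "outflow E \<notin> range f"
          have "rr3 \<notin> range f" using h nopair by blast
          have "\<forall>k. fst (f k) E = 0"
          proof
            fix k
            have "f k \<noteq> outflow E" "f k \<noteq> rr3" using h(2) \<open>rr3 \<notin> range f\<close> by (metis rangeI)+
            with Ncase[of k] show "fst (f k) E = 0"
              by (cases rule: N0_cases) (auto simp: cpl)
          qed
          then show ?thesis by (rule zcol)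
        next
          assume h: "rr6 \<in> range f" "outflow F \<notin> range f"
          have "rr5 \<notin> range f" using h nopair by blast
          have "\<forall>k. fst (f k) F = 0"
          proof
            fix k
            have "f k \<noteq> outflow F" "f k \<noteq> rr5" using h(2) \<open>rr5 \<notin> range f\<close> by (metis rangeI)+
            with Ncase[of k] show "fst (f k) F = 0"
              by (cases rule: N0_cases) (auto simp: cpl)
          qed
          then show ?thesis by (rule zcol)
        qed
        then show ?thesis by simp
      next
        case nozero: False
        define cD :: real where "cD = (if rr1 \<in> range f then 1 else 0)"
        define cE :: real where "cE = (if rr3 \<in> range f then 1 else 0)"
        define cF :: real where "cF = (if rr5 \<in> range f then 1 else 0)"
        define Q :: "real^species^species" where
          "Q = (\<chi> X Y. (if X = Y then 1 else 0) -
             (if X = D then cD * real (ABC Y) else if X = E then cE * real (ABC Y)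
              else if X = F then cF * real (AB Y) else 0))"
        define K where "K = {i. f i = rr2 \<or> f i = rr4 \<or> f i = rr6}"
        define g where "g i = (if f i = rr2 then inv f (outflow D) else if f i = rr4 then inv f (outflow E)
             else inv f (outflow F))" for i
        have g2: "f (g i) = outflow D" if "f i = rr2" for i
        proof -
          have "rr2 \<in> range f" using that by (metis rangeI)
          then have "outflow D \<in> range f" using nozero by blast
          then show ?thesis using that by (simp del: prod.inject add: g_def f_inv_into_f)
        qed
        have g4: "f (g i) = outflow E" if "f i = rr4" for i
        proof -
          have "rr4 \<in> range f" using that by (metis rangeI)
          then have "outflow E \<in> range f" using nozero by blast
          then show ?thesis using that by (simp del: prod.inject add: g_def f_inv_into_f)
        qed
        have g6: "f (g i) = outflow F" if "f i = rr6" for i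
        proof -
          have "rr6 \<in> range f" using that by (metis rangeI)
          then have "outflow F \<in> range f" using nozero by blast
          then show ?thesis using that by (simp del: prod.inject add: g_def f_inv_into_f)
        qed
        have gK: "\<forall>i\<in>K. g i \<notin> K"
        proof
          fix i assume "i \<in> K"
          then have "f i = rr2 \<or> f i = rr4 \<or> f i = rr6" by (simp del: prod.inject add: K_def)
          then have "f (g i) = outflow D \<or> f (g i) = outflow E \<or> f (g i) = outflow F"
            using g2 g4 g6 by blast
          then show "g i \<notin> K" by (auto simp del: prod.inject simp add: K_def)
        qed
        define R' where "R' = (\<chi> i. if i \<in> K then row i R + row (g i) R else row i R)"
        have dR': "det R' = det R" unfolding R'_def by (rule det_add_rows[OF gK])
        have cD0: "cD = 0" if "f i = outflow D" for i
          proof -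
          have "outflow D \<in> range f" using that by (metis rangeI)
          then have "rr1 \<notin> range f" using noid by blast
          then show ?thesis by (simp add: cD_def)
        qed
        have cD1: "cD = 1" if "f i = rr1" for i
          using that rangeI[of f i] unfolding cD_def by simp
        have cE0: "cE = 0" if "f i = outflow E" for i
          proof -
          have "outflow E \<in> range f" using that by (metis rangeI)
          then have "rr3 \<notin> range f" using noid by blast
          then show ?thesis by (simp add: cE_def)
        qed
        have cE1: "cE = 1" if "f i = rr3" for i
          using that rangeI[of f i] unfolding cE_def by simp
        have cF0: "cF = 0" if "f i = outflow F" for i
          proof -
          have "outflow F \<in> range f" using that by (metis rangeI)
          then have "rr5 \<notin> range f" using noid by blast
          then show ?thesis by (simp add: cF_def)
        qed
        have cF1: "cF = 1" if "f i = rr5" for i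
          using that rangeI[of f i] unfolding cF_def by simp
        have R'e: "R'$i$Y = (if i \<in> K then R$i$Y + R$(g i)$Y else R$i$Y)" for i Y
          by (simp add: R'_def row_def)
        have Pe: "(M ** Q)$i$Y = M$i$A * Q$A$Y + M$i$B * Q$B$Y + M$i$C * Q$C$Y
              + M$i$D * Q$D$Y + M$i$E * Q$E$Y + M$i$F * Q$F$Y" for i Y
          by (simp add: matrix_matrix_mult_def sum_species)
        have Qe: "Q$X$Y = (if X = Y then 1 else 0) -
             (if X = D then cD * real (ABC Y) else if X = E then cE * real (ABC Y)
              else if X = F then cF * real (AB Y) else 0)" for X Y
          by (simp add: Q_def)
        have key: "R'$i$Y = (M ** Q)$i$Y" for i Y
        proof -
          show ?thesis
            using Ncase[of i]
          proof (cases rule: N0_cases)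
            case 1
            have "i \<notin> K" using 1 by (simp del: prod.inject add: K_def)
            then show ?thesis using 1 cD1[OF 1] by (cases Y) (simp_all del: prod.inject add: R'e Pe Qe Mij Rij cpl)
          next
            case 2
            have "i \<in> K" using 2 by (simp del: prod.inject add: K_def)
            then show ?thesis using 2 g2[OF 2] by (cases Y) (simp_all del: prod.inject add: R'e Pe Qe Mij Rij cpl)
          next
            case 3
            have "i \<notin> K" using 3 by (simp del: prod.inject add: K_def)
            then show ?thesis using 3 cE1[OF 3] by (cases Y) (simp_all del: prod.inject add: R'e Pe Qe Mij Rij cpl)
          next
            case 4
            have "i \<in> K" using 4 by (simp del: prod.inject add: K_def)
            then show ?thesis using 4 g4[OF 4] by (cases Y) (simp_all del: prod.inject add: R'e Pe Qe Mij Rij cpl)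
          next
            case 5
            have "i \<notin> K" using 5 by (simp del: prod.inject add: K_def)
            then show ?thesis using 5 cF1[OF 5] by (cases Y) (simp_all del: prod.inject add: R'e Pe Qe Mij Rij cpl)
          next
            case 6
            have "i \<in> K" using 6 by (simp del: prod.inject add: K_def)
            then show ?thesis using 6 g6[OF 6] by (cases Y) (simp_all del: prod.inject add: R'e Pe Qe Mij Rij cpl)
          next
            case 7
            have "i \<notin> K" using 7 by (simp del: prod.inject add: K_def)
            then show ?thesis using 7 by (cases Y) (simp_all del: prod.inject add: R'e Pe Qe Mij Rij cpl)
          next
            case 8
            have "i \<notin> K" using 8 by (simp del: prod.inject add: K_def)
            then show ?thesis using 8 by (cases Y) (simp_all del: prod.inject add: R'e Pe Qe Mij Rij cpl)
          next
            case 9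
            have "i \<notin> K" using 9 by (simp del: prod.inject add: K_def)
            then show ?thesis using 9 by (cases Y) (simp_all del: prod.inject add: R'e Pe Qe Mij Rij cpl)
          next
            case 10
            have "i \<notin> K" using 10 by (simp del: prod.inject add: K_def)
            then show ?thesis using 10 cD0[OF 10] by (cases Y) (simp_all del: prod.inject add: R'e Pe Qe Mij Rij cpl)
          next
            case 11
            have "i \<notin> K" using 11 by (simp del: prod.inject add: K_def)
            then show ?thesis using 11 cE0[OF 11] by (cases Y) (simp_all del: prod.inject add: R'e Pe Qe Mij Rij cpl)
          next
            case 12
            have "i \<notin> K" using 12 by (simp del: prod.inject add: K_def)
            then show ?thesis using 12 cF0[OF 12] by (cases Y) (simp_all del: prod.inject add: R'e Pe Qe Mij Rij cpl)
          qed
        qed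
        have "R' = M ** Q" using key by (simp add: vec_eq_iff)
        have dQ: "det Q = 1"
        proof -
          have "det Q = prod (\<lambda>i. Q$i$i) (UNIV :: species set)"
          proof (rule det_lowerdiagonal)
            fix i j :: species assume "i < j"
            then show "Q$i$j = 0"
              by (cases i; cases j; simp add: Q_def less_species_def cpl)
          qed
          also have "\<dots> = 1" by (simp add: UNIV_species Q_def cpl)
          finally show ?thesis .
        qed
        have "det R = det M"
          using dR' \<open>R' = M ** Q\<close> dQ by (simp add: det_mul)
        then show ?thesis by simp
      qed
    qed
  qed
  then show ?thesis by (simp add: M_def R_def)
qed


theorem mainTheorem11:
  assumes "I \<subseteq> range inflow"
  shows "passes_jacobian_criterion (network I)"
  unfolding passes_jacobian_criterion_def
proof (intro allI impI)
  fix f :: "species \<Rightarrow> species reaction"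
  assume inj: "inj f" and H: "\<forall>k. f k \<in> network I \<and> \<not> is_inflow (f k)"
  have N: "\<forall>k. f k \<in> nonflow_reactions \<union> range outflow"
  proof
    fix k
    have "f k \<notin> I" using H assms unfolding is_inflow_def by blast
    then show "f k \<in> nonflow_reactions \<union> range outflow"
      using H unfolding network_def by blast
  qed
  have d: "det (reactant_matrix f) = 0 \<or> det (reaction_matrix f) = 0 \<or>
         det (reaction_matrix f) = det (reactant_matrix f)"
    by (rule main_det[OF inj N])
  have "det (reactant_matrix f) * det (reaction_matrix f) \<ge> 0"
    using d by auto
  then show "orientation f \<ge> 0"
    unfolding orientation_def by (simp add: sgn_if)
qed

end
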